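(* Let $(K,d_K)$ be an acyclic graded-commutative dg-algebra and let $(A,d_A)$ be a dg-algebra over $(K,d_K)$. Then the map $\alpha:\ker(d_A)\otimes_{\ker(d_K)}K\to A$, $a\otimes x\mapsto ax$, is an isomorphism of dg-algebras, where $\ker(d_A)\otimes_{\ker(d_K)}K$ carries the differential $a\otimes x\mapsto(-1)^{|a|}a\otimes d_K(x)$.
   Context: Dg-algebra: $\mathbb Z$-graded algebra with degree-$1$ map $d$, $d^2=0$, $d(ab)=d(a)b+(-1)^{|a|}a\,d(b)$. Acyclic means the cohomology $H(K,d_K)=\ker(d_K)/\mathrm{im}(d_K)$ vanishes. Graded-commutative: $xy=(-1)^{|x||y|}yx$ for homogeneous $x,y$. Graded centre $Z_{gr}(A)$: spanned by homogeneous $z$ with $za=(-1)^{|z||a|}az$. A dg-algebra over $(K,d_K)$ is a dg-algebra $(A,d_A)$ with a degree-$0$ graded ring homomorphism $K\to Z_{gr}(A)$ commuting with differentials. The tensor product algebra uses $(a\otimes x)(b\otimes y)=(-1)^{|x||b|}ab\otimes xy$. *)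

theory Defs
  imports Main "HOL-Library.Poly_Mapping"
begin

definition gsign :: "int \<Rightarrow> 'a::ring_1" where
  "gsign n = (if even n then 1 else - 1)"

(* A Z-grading of a ring 'a: gr n is the homogeneous component of degree n;
   'a is the internal direct sum of the gr n and gr m * gr n \<subseteq> gr (m+n). *)
definition graded :: "(int \<Rightarrow> 'a::ring_1 set) \<Rightarrow> bool" where
  "graded gr \<longleftrightarrow>
     (\<forall>n. 0 \<in> gr n \<and> (\<forall>x\<in>gr n. \<forall>y\<in>gr n. x + y \<in> gr n) \<and> (\<forall>x\<in>gr n. - x \<in> gr n)) \<and>
     (\<forall>m n x y. x \<in> gr m \<longrightarrow> y \<in> gr n \<longrightarrow> x * y \<in> gr (m + n)) \<and>
     1 \<in> gr 0 \<and>
     (\<forall>x. \<exists>!f. finite {n. f n \<noteq> 0} \<and> (\<forall>n. f n \<in> gr n) \<and> x = (\<Sum>n | f n \<noteq> 0. f n))"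

definition comp :: "(int \<Rightarrow> 'a::ring_1 set) \<Rightarrow> int \<Rightarrow> 'a \<Rightarrow> 'a" where
  "comp gr n x = (THE f. finite {n. f n \<noteq> 0} \<and> (\<forall>n. f n \<in> gr n) \<and> x = (\<Sum>n | f n \<noteq> 0. f n)) n"

definition degs :: "(int \<Rightarrow> 'a::ring_1 set) \<Rightarrow> 'a \<Rightarrow> int set" where
  "degs gr x = {n. comp gr n x \<noteq> 0}"

definition dg_algebra :: "(int \<Rightarrow> 'a::ring_1 set) \<Rightarrow> ('a \<Rightarrow> 'a) \<Rightarrow> bool" where
  "dg_algebra gr d \<longleftrightarrow> graded gr \<and>
     (\<forall>x y. d (x + y) = d x + d y) \<and>
     (\<forall>n x. x \<in> gr n \<longrightarrow> d x \<in> gr (n + 1)) \<and>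
     (\<forall>x. d (d x) = 0) \<and>
     (\<forall>n a b. a \<in> gr n \<longrightarrow> d (a * b) = d a * b + gsign n * (a * d b))"

definition acyclic :: "('a::ring_1 \<Rightarrow> 'a) \<Rightarrow> bool" where
  "acyclic d \<longleftrightarrow> (\<forall>x. d x = 0 \<longrightarrow> (\<exists>y. x = d y))"

definition graded_commutative :: "(int \<Rightarrow> 'a::ring_1 set) \<Rightarrow> bool" where
  "graded_commutative gr \<longleftrightarrow>
     (\<forall>m n x y. x \<in> gr m \<longrightarrow> y \<in> gr n \<longrightarrow> x * y = gsign (m * n) * (y * x))"

inductive_set gr_centre :: "(int \<Rightarrow> 'a::ring_1 set) \<Rightarrow> 'a set" for gr where
  zero: "0 \<in> gr_centre gr"
| gen: "z \<in> gr n \<Longrightarrow> (\<And>m a. a \<in> gr m \<Longrightarrow> z * a = gsign (n * m) * (a * z)) \<Longrightarrow> z \<in> gr_centre gr"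
| add: "z \<in> gr_centre gr \<Longrightarrow> w \<in> gr_centre gr \<Longrightarrow> z + w \<in> gr_centre gr"

definition dg_algebra_over ::
  "(int \<Rightarrow> 'k::ring_1 set) \<Rightarrow> ('k \<Rightarrow> 'k) \<Rightarrow> (int \<Rightarrow> 'a::ring_1 set) \<Rightarrow> ('a \<Rightarrow> 'a) \<Rightarrow> ('k \<Rightarrow> 'a) \<Rightarrow> bool" where
  "dg_algebra_over grK dK grA dA phi \<longleftrightarrow> dg_algebra grK dK \<and> dg_algebra grA dA \<and>
     (\<forall>x y. phi (x + y) = phi x + phi y) \<and> (\<forall>x y. phi (x * y) = phi x * phi y) \<and> phi 1 = 1 \<and>
     (\<forall>n x. x \<in> grK n \<longrightarrow> phi x \<in> grA n) \<and>
     (\<forall>x. phi x \<in> gr_centre grA) \<and>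
     (\<forall>x. phi (dK x) = dA (phi x))"

(* Tensor product ker(dA) \<otimes>_{ker(dK)} K, realised as the free abelian group on pairs
   (a,x) with a \<in> ker dA, x \<in> K (type ('a \<times> 'k) \<Rightarrow>\<^sub>0 int, domain tens_dom) modulo the
   subgroup tens_rel generated by the bilinearity and balancing relations.
   ker dA is a right ker(dK)-module via a\<cdot>r = a * phi r, K a left one by multiplication. *)
definition tens_dom :: "('a::ring_1 \<Rightarrow> 'a) \<Rightarrow> (('a \<times> 'k) \<Rightarrow>\<^sub>0 int) set" where
  "tens_dom dA = {t. Poly_Mapping.keys t \<subseteq> {a. dA a = 0} \<times> UNIV}"

inductive_set tens_rel ::
  "('k::ring_1 \<Rightarrow> 'k) \<Rightarrow> ('a::ring_1 \<Rightarrow> 'a) \<Rightarrow> ('k \<Rightarrow> 'a) \<Rightarrow> (('a \<times> 'k) \<Rightarrow>\<^sub>0 int) set"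
  for dK dA phi where
  add_left: "dA a = 0 \<Longrightarrow> dA a' = 0 \<Longrightarrow>
     frag_of (a + a', x) - frag_of (a, x) - frag_of (a', x) \<in> tens_rel dK dA phi"
| add_right: "dA a = 0 \<Longrightarrow>
     frag_of (a, x + x') - frag_of (a, x) - frag_of (a, x') \<in> tens_rel dK dA phi"
| balanced: "dA a = 0 \<Longrightarrow> dK r = 0 \<Longrightarrow>
     frag_of (a * phi r, x) - frag_of (a, r * x) \<in> tens_rel dK dA phi"
| zero: "0 \<in> tens_rel dK dA phi"
| diff: "t \<in> tens_rel dK dA phi \<Longrightarrow> s \<in> tens_rel dK dA phi \<Longrightarrow> t - s \<in> tens_rel dK dA phi"

definition tens_alpha :: "('k \<Rightarrow> 'a::ring_1) \<Rightarrow> (('a \<times> 'k) \<Rightarrow>\<^sub>0 int) \<Rightarrow> 'a" where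
  "tens_alpha phi t = (\<Sum>p\<in>Poly_Mapping.keys t. of_int (Poly_Mapping.lookup t p) * (fst p * phi (snd p)))"

(* differential on the tensor product: a \<otimes> x \<mapsto> (-1)^|a| a \<otimes> dK x (for homogeneous a),
   extended additively *)
definition tens_diff ::
  "(int \<Rightarrow> 'a::ring_1 set) \<Rightarrow> ('k \<Rightarrow> 'k) \<Rightarrow> (('a \<times> 'k) \<Rightarrow>\<^sub>0 int) \<Rightarrow> (('a \<times> 'k) \<Rightarrow>\<^sub>0 int)" where
  "tens_diff grA dK t = frag_extend (\<lambda>p.
      \<Sum>n\<in>degs grA (fst p). frag_cmul (gsign n) (frag_of (comp grA n (fst p), dK (snd p)))) t"

(* product on the tensor product: (a \<otimes> x)(b \<otimes> y) = (-1)^(|x||b|) ab \<otimes> xy (homogeneous x, b),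
   extended biadditively *)
definition tens_mult ::
  "(int \<Rightarrow> 'k::ring_1 set) \<Rightarrow> (int \<Rightarrow> 'a::ring_1 set) \<Rightarrow>
   (('a \<times> 'k) \<Rightarrow>\<^sub>0 int) \<Rightarrow> (('a \<times> 'k) \<Rightarrow>\<^sub>0 int) \<Rightarrow> (('a \<times> 'k) \<Rightarrow>\<^sub>0 int)" where
  "tens_mult grK grA t s = frag_extend (\<lambda>p. frag_extend (\<lambda>q.
      \<Sum>i\<in>degs grK (snd p). \<Sum>j\<in>degs grA (fst q).
        frag_cmul (gsign (i * j)) (frag_of (fst p * comp grA j (fst q), comp grK i (snd p) * snd q))) s) t"

definition tens_one :: "('a::ring_1 \<times> 'k::ring_1) \<Rightarrow>\<^sub>0 int" where
  "tens_one = frag_of (1, 1)"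

definition tens_gr ::
  "(int \<Rightarrow> 'k::ring_1 set) \<Rightarrow> (int \<Rightarrow> 'a::ring_1 set) \<Rightarrow> ('a \<Rightarrow> 'a) \<Rightarrow> int \<Rightarrow> (('a \<times> 'k) \<Rightarrow>\<^sub>0 int) set" where
  "tens_gr grK grA dA n =
     {t. Poly_Mapping.keys t \<subseteq> {(a, x). dA a = 0 \<and> (\<exists>p. a \<in> grA p \<and> x \<in> grK (n - p))}}"

end

theory Submission
  imports Defs
begin
lemma graded_D:
  assumes "graded gr"
  shows "0 \<in> gr n" "x \<in> gr n \<Longrightarrow> y \<in> gr n \<Longrightarrow> x + y \<in> gr n" "x \<in> gr n \<Longrightarrow> - x \<in> gr n"
    "x \<in> gr m \<Longrightarrow> y \<in> gr k \<Longrightarrow> x * y \<in> gr (m+k)" "1 \<in> gr 0"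
proof -
  note g = assms[unfolded graded_def]
  have A: "\<forall>n. 0 \<in> gr n \<and> (\<forall>x\<in>gr n. \<forall>y\<in>gr n. x + y \<in> gr n) \<and> (\<forall>x\<in>gr n. - x \<in> gr n)"
    using g by (rule conjunct1)
  have B: "\<forall>m n x y. x \<in> gr m \<longrightarrow> y \<in> gr n \<longrightarrow> x * y \<in> gr (m + n)"
    using g by (rule conjunct1[OF conjunct2])
  have C: "1 \<in> gr 0" using g by (rule conjunct1[OF conjunct2[OF conjunct2]])
  show "0 \<in> gr n" using A by blast
  show "x \<in> gr n \<Longrightarrow> y \<in> gr n \<Longrightarrow> x + y \<in> gr n" using A by blast
  show "x \<in> gr n \<Longrightarrow> - x \<in> gr n" using A by blast
  show "x \<in> gr m \<Longrightarrow> y \<in> gr k \<Longrightarrow> x * y \<in> gr (m+k)" using B by blast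
  show "1 \<in> gr 0" by (rule C)
qed

lemma graded_ex1: "graded gr \<Longrightarrow> \<exists>!f. finite {n. f n \<noteq> 0} \<and> (\<forall>n. f n \<in> gr n) \<and> x = (\<Sum>n | f n \<noteq> 0. f n)"
  unfolding graded_def by (drule conjunct2[OF conjunct2[OF conjunct2]]) (erule spec)

lemma comp_props:
  assumes "graded gr"
  shows "finite (degs gr x)" "comp gr n x \<in> gr n" "x = (\<Sum>n\<in>degs gr x. comp gr n x)"
proof -
  let ?P = "\<lambda>f. finite {n. f n \<noteq> 0} \<and> (\<forall>n. f n \<in> gr n) \<and> x = (\<Sum>n | f n \<noteq> 0. f n)"
  define F where "F = (THE f. ?P f)"
  have P: "?P F" unfolding F_def using theI'[OF graded_ex1[OF assms]] .
  have c: "comp gr k x = F k" for k unfolding comp_def F_def by (rule refl)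
  have d: "degs gr x = {n. F n \<noteq> 0}" unfolding degs_def c by (rule refl)
  show "finite (degs gr x)" unfolding d using P by blast
  show "comp gr n x \<in> gr n" unfolding c using P by blast
  show "x = (\<Sum>n\<in>degs gr x. comp gr n x)" unfolding d c by (rule conjunct2[OF conjunct2[OF P]])
qed

lemma comp_unique:
  assumes "graded gr" "finite S" "\<And>n. f n \<in> gr n" "\<And>n. n \<notin> S \<Longrightarrow> f n = 0" "x = (\<Sum>n\<in>S. f n)"
  shows "comp gr n x = f n"
proof -
  let ?P = "\<lambda>f. finite {n. f n \<noteq> 0} \<and> (\<forall>n. f n \<in> gr n) \<and> x = (\<Sum>n | f n \<noteq> 0. f n)"
  have sub: "{n. f n \<noteq> 0} \<subseteq> S" using assms(4) by blast
  have "?P f"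
  proof (intro conjI)
    show "finite {n. f n \<noteq> 0}" using finite_subset[OF sub assms(2)] .
    show "\<forall>n. f n \<in> gr n" using assms(3) by blast
    show "x = (\<Sum>n | f n \<noteq> 0. f n)" unfolding assms(5)
      by (rule sum.mono_neutral_right[OF assms(2) sub]) blast
  qed
  then have "(THE f. ?P f) = f" by (rule the1_equality[OF graded_ex1[OF assms(1)]])
  then show ?thesis unfolding comp_def by (rule arg_cong[where f="\<lambda>g. g n"])
qed

lemma sum_in_gr:
  assumes "graded gr" "finite S" "\<And>i. i \<in> S \<Longrightarrow> f i \<in> gr n"
  shows "(\<Sum>i\<in>S. f i) \<in> gr n"
  using assms(2,3) by (induction S rule: finite_induct) (auto intro: graded_D[OF assms(1)])

lemma comp_hom:
  assumes "graded gr" "x \<in> gr m"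
  shows "comp gr n x = (if n = m then x else 0)"
  by (rule comp_unique[OF assms(1), of "{m}"]) (use assms graded_D(1)[OF assms(1)] in auto)

lemma comp_zero: "graded gr \<Longrightarrow> comp gr n 0 = 0"
  using comp_hom[of gr 0 0 n] graded_D(1) by auto

lemma degs_eq:
  assumes "graded gr" "finite S" "degs gr x \<subseteq> S" "\<And>n. F n 0 = 0"
  shows "(\<Sum>n\<in>degs gr x. F n (comp gr n x)) = (\<Sum>n\<in>S. F n (comp gr n x))"
  by (rule sum.mono_neutral_left[OF assms(2,3)]) (auto simp: degs_def assms(4))

lemma comp_expand:
  assumes "graded gr" "finite S" "degs gr x \<subseteq> S"
  shows "x = (\<Sum>n\<in>S. comp gr n x)"
proof -
  have e: "(\<Sum>n\<in>degs gr x. comp gr n x) = (\<Sum>n\<in>S. comp gr n x)"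
    by (rule sum.mono_neutral_left[OF assms(2,3)]) (auto simp: degs_def)
  show ?thesis using trans[OF comp_props(3)[OF assms(1), of x] e] .
qed

lemma comp_add:
  assumes "graded gr"
  shows "comp gr n (x + y) = comp gr n x + comp gr n y"
proof (rule comp_unique[OF assms, of "degs gr x \<union> degs gr y"])
  show "finite (degs gr x \<union> degs gr y)" using comp_props(1)[OF assms] by auto
  show "comp gr k x + comp gr k y \<in> gr k" for k using comp_props(2)[OF assms] graded_D(2)[OF assms] by blast
  show "k \<notin> degs gr x \<union> degs gr y \<Longrightarrow> comp gr k x + comp gr k y = 0" for k by (auto simp: degs_def)
  have X: "x = (\<Sum>n\<in>degs gr x \<union> degs gr y. comp gr n x)"
    by (rule comp_expand[OF assms]) (auto simp: comp_props(1)[OF assms])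
  have Y: "y = (\<Sum>n\<in>degs gr x \<union> degs gr y. comp gr n y)"
    by (rule comp_expand[OF assms]) (auto simp: comp_props(1)[OF assms])
  show "x + y = (\<Sum>n\<in>degs gr x \<union> degs gr y. comp gr n x + comp gr n y)"
    by (subst sum.distrib) (rule arg_cong2[where f="(+)", OF X Y])
qed

lemma gsign_cases: "gsign n = (1::'a::ring_1) \<or> gsign n = -1"
  unfolding gsign_def by auto

lemma gsign_sq: "gsign n * gsign n = (1::'a::ring_1)"
  unfolding gsign_def by auto

lemma gsign_m1: "gsign (-1) = (-1::'a::ring_1)"
  unfolding gsign_def by auto

lemma of_int_gsign: "of_int (gsign n) = gsign n"
  unfolding gsign_def by auto

lemma gsign_in_gr: "graded gr \<Longrightarrow> x \<in> gr m \<Longrightarrow> gsign k * x \<in> gr m"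
  unfolding gsign_def using graded_D(3) by auto

lemma of_int_in_gr:
  assumes "graded gr" "x \<in> gr m"
  shows "of_int k * x \<in> gr m"
proof -
  have nat: "of_nat j * x \<in> gr m" for j
  proof (induction j)
    case 0 then show ?case using graded_D(1)[OF assms(1)] by simp
  next
    case (Suc j)
    have "of_nat (Suc j) * x = x + of_nat j * x" by (simp add: distrib_right)
    then show ?case using graded_D(2)[OF assms(1) assms(2) Suc] by simp
  qed
  show ?thesis
  proof (cases "k \<ge> 0")
    case True then obtain j where "k = int j" using nonneg_int_cases by blast
    then have "of_int k * x = of_nat j * x" by simp
    then show ?thesis using nat[of j] by (simp only:)
  next
    case False
    define j where "j = nat (-k)"
    have "k = - int j" using False unfolding j_def by simp
    then have "of_int k * x = - (of_nat j * x)" by simp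
    then show ?thesis using graded_D(3)[OF assms(1) nat[of j]] by (simp only:)
  qed
qed

lemma dgD:
  assumes "dg_algebra gr d"
  shows "graded gr" "d (x + y) = d x + d y" "x \<in> gr n \<Longrightarrow> d x \<in> gr (n + 1)" "d (d x) = 0"
    "a \<in> gr n \<Longrightarrow> d (a * b) = d a * b + gsign n * (a * d b)"
  using assms unfolding dg_algebra_def by blast+

lemma d_zero: "dg_algebra gr d \<Longrightarrow> d 0 = 0"
  using dgD(2)[of gr d 0 0] by simp

lemma d_minus: "dg_algebra gr d \<Longrightarrow> d (- x) = - d x"
proof -
  assume a: "dg_algebra gr d"
  have "d x + d (- x) = 0" using dgD(2)[OF a, of x "-x"] d_zero[OF a] by simp
  then show ?thesis by (rule minus_unique[symmetric])
qed

lemma d_diff: "dg_algebra gr d \<Longrightarrow> d (x - y) = d x - d y"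
  using dgD(2)[of gr d x "-y"] d_minus[of gr d y] by simp

lemma d_sum: "dg_algebra gr d \<Longrightarrow> d (\<Sum>i\<in>S. f i) = (\<Sum>i\<in>S. d (f i))"
  by (induction S rule: infinite_finite_induct) (auto simp: d_zero dgD(2))

lemma d_of_int:
  assumes "dg_algebra gr d"
  shows "d (of_int k * x) = of_int k * d x"
proof -
  have nat: "d (of_nat j * x) = of_nat j * d x" for j
    by (induction j) (auto simp: distrib_right dgD(2)[OF assms] d_zero[OF assms])
  show ?thesis
  proof (cases "k \<ge> 0")
    case True then obtain j where "k = int j" using nonneg_int_cases by blast
    then show ?thesis using nat by simp
  next
    case False
    define j where "j = nat (-k)"
    have "k = - int j" using False unfolding j_def by simp
    then have "of_int k * x = - (of_nat j * x)" "of_int k * d x = - (of_nat j * d x)" by simp_all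
    then show ?thesis using nat[of j] d_minus[OF assms] by simp
  qed
qed

lemma d_gsign: "dg_algebra gr d \<Longrightarrow> d (gsign k * x) = gsign k * d x"
  using gsign_cases[of k] d_minus[of gr d x] by (metis mult_1 mult_minus_left)

lemma comp_d:
  assumes "dg_algebra gr d"
  shows "comp gr m (d x) = d (comp gr (m - 1) x)"
proof (rule comp_unique[OF dgD(1)[OF assms], of "(\<lambda>n. n + 1) ` degs gr x"])
  note G = dgD(1)[OF assms]
  show "finite ((\<lambda>n. n + 1) ` degs gr x)" using comp_props(1)[OF G] by simp
  show "d (comp gr (k - 1) x) \<in> gr k" for k
    using dgD(3)[OF assms comp_props(2)[OF G, of "k-1" x]] by simp
  show "k \<notin> (\<lambda>n. n + 1) ` degs gr x \<Longrightarrow> d (comp gr (k - 1) x) = 0" for k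
  proof -
    assume "k \<notin> (\<lambda>n. n + 1) ` degs gr x"
    then have "k - 1 \<notin> degs gr x" by (metis diff_add_cancel image_eqI)
    then show ?thesis by (simp add: degs_def d_zero[OF assms])
  qed
  have "d x = d (\<Sum>n\<in>degs gr x. comp gr n x)"
    by (rule arg_cong[where f=d, OF comp_props(3)[OF G, of x]])
  also have "\<dots> = (\<Sum>n\<in>degs gr x. d (comp gr n x))" by (rule d_sum[OF assms])
  also have "\<dots> = (\<Sum>k\<in>(\<lambda>n. n + 1) ` degs gr x. d (comp gr (k - 1) x))"
    by (subst sum.reindex) (auto simp: inj_on_def)
  finally show "d x = (\<Sum>k\<in>(\<lambda>n. n + 1) ` degs gr x. d (comp gr (k - 1) x))" .
qed

lemma comp_cycle:
  assumes "dg_algebra gr d" "d x = 0"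
  shows "d (comp gr n x) = 0"
  using comp_d[OF assms(1), of "n+1" x] assms(2) comp_zero[OF dgD(1)[OF assms(1)]] by simp

lemma leib_gen:
  assumes "dg_algebra gr d"
  shows "d (a * b) = (\<Sum>n\<in>degs gr a. d (comp gr n a) * b + gsign n * (comp gr n a * d b))"
proof -
  note G = dgD(1)[OF assms]
  have "a * b = (\<Sum>n\<in>degs gr a. comp gr n a) * b"
    by (rule arg_cong[where f="\<lambda>z. z * b", OF comp_props(3)[OF G, of a]])
  also have "\<dots> = (\<Sum>n\<in>degs gr a. comp gr n a * b)" by (rule sum_distrib_right)
  finally have "d (a * b) = d (\<Sum>n\<in>degs gr a. comp gr n a * b)" by (rule arg_cong)
  also have "\<dots> = (\<Sum>n\<in>degs gr a. d (comp gr n a * b))" by (rule d_sum[OF assms])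
  also have "\<dots> = (\<Sum>n\<in>degs gr a. d (comp gr n a) * b + gsign n * (comp gr n a * d b))"
    by (rule sum.cong) (auto intro: dgD(5)[OF assms comp_props(2)[OF G]])
  finally show ?thesis .
qed

lemma cycle_mult:
  assumes "dg_algebra gr d" "d a = 0" "d b = 0"
  shows "d (a * b) = 0"
  using leib_gen[OF assms(1), of a b] comp_cycle[OF assms(1,2)] assms(3) by simp

lemma d_one:
  assumes "dg_algebra gr d"
  shows "d 1 = 0"
proof -
  have "d (1 * 1) = d 1 * 1 + gsign 0 * (1 * d 1)"
    by (rule dgD(5)[OF assms graded_D(5)[OF dgD(1)[OF assms]]])
  then have "d 1 = d 1 + d 1" by (simp add: gsign_def)
  then show ?thesis by simp
qed

lemma exists_h:
  assumes "dg_algebra gr d" "acyclic d"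
  shows "\<exists>h. h \<in> gr (-1) \<and> d h = 1"
proof -
  note G = dgD(1)[OF assms(1)]
  obtain y where y: "1 = d y" using assms(2) d_one[OF assms(1)] unfolding acyclic_def by blast
  have "comp gr 0 (d y) = d (comp gr (-1) y)" using comp_d[OF assms(1), of 0 y] by simp
  moreover have "comp gr 0 (1::'a) = 1" using comp_hom[OF G graded_D(5)[OF G]] by simp
  ultimately show ?thesis using comp_props(2)[OF G] y by metis
qed

definition lin :: "('b \<Rightarrow> 'a::ring_1) \<Rightarrow> ('b \<Rightarrow>\<^sub>0 int) \<Rightarrow> 'a" where
  "lin w t = (\<Sum>p\<in>Poly_Mapping.keys t. of_int (Poly_Mapping.lookup t p) * w p)"

lemma alpha_lin: "tens_alpha phi = lin (\<lambda>p. fst p * phi (snd p))"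
  by (rule ext) (simp add: tens_alpha_def lin_def)

lemma lin_superset:
  assumes "finite S" "Poly_Mapping.keys t \<subseteq> S"
  shows "lin w t = (\<Sum>p\<in>S. of_int (Poly_Mapping.lookup t p) * w p)"
  unfolding lin_def by (rule sum.mono_neutral_left[OF assms]) (auto simp: in_keys_iff)

lemma lin_add: "lin w (s + t) = lin w s + lin w t"
proof -
  let ?S = "Poly_Mapping.keys s \<union> Poly_Mapping.keys t"
  have f: "finite ?S" by simp
  have "lin w (s + t) = (\<Sum>p\<in>?S. of_int (Poly_Mapping.lookup (s+t) p) * w p)"
    by (rule lin_superset[OF f]) (simp add: keys_add)
  also have "\<dots> = (\<Sum>p\<in>?S. of_int (Poly_Mapping.lookup s p) * w p) + (\<Sum>p\<in>?S. of_int (Poly_Mapping.lookup t p) * w p)"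
    by (simp add: lookup_add distrib_right sum.distrib)
  also have "\<dots> = lin w s + lin w t"
    by (simp add: lin_superset[OF f])
  finally show ?thesis .
qed

lemma lin_zero [simp]: "lin w 0 = 0"
  by (simp add: lin_def)

lemma lin_minus: "lin w (- t) = - lin w t"
  by (metis add.right_inverse add_eq_0_iff lin_add lin_zero)

lemma lin_diff: "lin w (s - t) = lin w s - lin w t"
  by (metis diff_conv_add_uminus lin_add lin_minus)

lemma lin_of [simp]: "lin w (frag_of p) = w p"
  by (simp add: lin_def)

lemma lin_cmul: "lin w (frag_cmul c t) = of_int c * lin w t"
proof -
  have "lin w (frag_cmul c t) = (\<Sum>p\<in>Poly_Mapping.keys t. of_int (Poly_Mapping.lookup (frag_cmul c t) p) * w p)"
    by (rule lin_superset) (auto simp: keys_cmul)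
  also have "\<dots> = of_int c * lin w t"
    by (simp add: lin_def sum_distrib_left mult.assoc)
  finally show ?thesis .
qed

lemma lin_sum: "lin w (\<Sum>i\<in>S. f i) = (\<Sum>i\<in>S. lin w (f i))"
  by (induction S rule: infinite_finite_induct) (auto simp: lin_add)

lemma lin_cong: "(\<And>p. p \<in> Poly_Mapping.keys t \<Longrightarrow> w p = w' p) \<Longrightarrow> lin w t = lin w' t"
  unfolding lin_def by (rule sum.cong) auto

lemma lin_extend: "lin w (frag_extend f t) = lin (\<lambda>p. lin w (f p)) t"
  unfolding frag_extend_def lin_sum lin_cmul lin_def[of "\<lambda>p. lin w (f p)" t] by (rule refl)

lemma lin_mult_left: "lin (\<lambda>p. c * w p) t = c * lin w t"
  unfolding lin_def sum_distrib_left
  by (rule sum.cong) (auto simp: mult_of_int_commute mult.assoc)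

lemma lin_mult_right: "lin (\<lambda>p. w p * c) t = lin w t * c"
  unfolding lin_def sum_distrib_right
  by (rule sum.cong) (auto simp: mult.assoc)

lemma lin_in_gr:
  assumes "graded gr" "\<And>p. p \<in> Poly_Mapping.keys t \<Longrightarrow> w p \<in> gr n"
  shows "lin w t \<in> gr n"
  unfolding lin_def by (rule sum_in_gr[OF assms(1)]) (auto intro: of_int_in_gr[OF assms(1)] assms(2))

lemma lin_d:
  assumes "dg_algebra gr d"
  shows "d (lin w t) = lin (\<lambda>p. d (w p)) t"
  unfolding lin_def by (simp add: d_sum[OF assms] d_of_int[OF assms])

lemma gsign_commute: "gsign k * x = x * (gsign k :: 'a::ring_1)"
  using gsign_cases[of k] by (metis mult_1 mult_1_right mult_minus_left mult_minus_right)

lemma gsign_cancel: "gsign k * (gsign k * x) = (x::'a::ring_1)"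
  by (simp add: mult.assoc[symmetric] gsign_sq)

lemma centre_comp:
  assumes "graded gr" "z \<in> gr_centre gr"
  shows "b \<in> gr j \<Longrightarrow> comp gr m z * b = gsign (m * j) * (b * comp gr m z)"
  using assms(2)
proof (induction arbitrary: m b j rule: gr_centre.induct)
  case zero
  then show ?case by (simp add: comp_zero[OF assms(1)])
next
  case (gen z n)
  then show ?case by (simp add: comp_hom[OF assms(1)])
next
  case (add z w)
  then show ?case by (simp add: comp_add[OF assms(1)] distrib_left distrib_right)
qed

lemma centre_hom:
  assumes "graded gr" "z \<in> gr_centre gr" "z \<in> gr i" "b \<in> gr j"
  shows "z * b = gsign (i * j) * (b * z)"
  using centre_comp[OF assms(1,2,4), of i] comp_hom[OF assms(1,3), of i] by simp

lemma dom_iff: "t \<in> tens_dom dA \<longleftrightarrow> (\<forall>p\<in>Poly_Mapping.keys t. dA (fst p) = 0)"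
  unfolding tens_dom_def by force

lemma dom_extend: "(\<And>p. p \<in> Poly_Mapping.keys t \<Longrightarrow> f p \<in> tens_dom dA) \<Longrightarrow> frag_extend f t \<in> tens_dom dA"
  using keys_frag_extend[of f t] unfolding dom_iff by blast

lemma dom_sum: "(\<And>i. i \<in> S \<Longrightarrow> f i \<in> tens_dom dA) \<Longrightarrow> (\<Sum>i\<in>S. f i) \<in> tens_dom dA"
  using keys_sum[of f S] unfolding dom_iff by blast

lemma dom_cmul: "t \<in> tens_dom dA \<Longrightarrow> frag_cmul c t \<in> tens_dom dA"
  using keys_cmul[of c t] unfolding dom_iff by blast

lemma dom_diff: "t \<in> tens_dom dA \<Longrightarrow> s \<in> tens_dom dA \<Longrightarrow> t - s \<in> tens_dom dA"
  using keys_diff[of t s] unfolding dom_iff by blast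

lemma dom_of: "dA a = 0 \<Longrightarrow> frag_of (a, x) \<in> tens_dom dA"
  unfolding dom_iff by simp

locale setting =
  fixes grK :: "int \<Rightarrow> 'k::ring_1 set" and dK :: "'k \<Rightarrow> 'k"
    and grA :: "int \<Rightarrow> 'a::ring_1 set" and dA :: "'a \<Rightarrow> 'a"
    and phi :: "'k \<Rightarrow> 'a"
  assumes DK: "dg_algebra grK dK" and GC: "graded_commutative grK" and AC: "acyclic dK"
    and OV: "dg_algebra_over grK dK grA dA phi"
begin

lemma DA: "dg_algebra grA dA" using OV unfolding dg_algebra_over_def by blast
lemma GK: "graded grK" using dgD(1)[OF DK] .
lemma GA: "graded grA" using dgD(1)[OF DA] .
lemma phi_add: "phi (x + y) = phi x + phi y" using OV unfolding dg_algebra_over_def by blast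
lemma phi_mult: "phi (x * y) = phi x * phi y" using OV unfolding dg_algebra_over_def by blast
lemma phi_one: "phi 1 = 1" using OV unfolding dg_algebra_over_def by blast
lemma phi_deg: "x \<in> grK n \<Longrightarrow> phi x \<in> grA n" using OV unfolding dg_algebra_over_def by blast
lemma phi_centre: "phi x \<in> gr_centre grA" using OV unfolding dg_algebra_over_def by blast
lemma phi_d: "phi (dK x) = dA (phi x)" using OV unfolding dg_algebra_over_def by blast
lemma phi_zero: "phi 0 = 0" using phi_add[of 0 0] by simp
lemma phi_sum: "phi (\<Sum>i\<in>S. f i) = (\<Sum>i\<in>S. phi (f i))"
  by (induction S rule: infinite_finite_induct) (auto simp: phi_zero phi_add)

definition h where "h = (SOME h. h \<in> grK (-1) \<and> dK h = 1)"
lemma h_props: "h \<in> grK (-1)" "dK h = 1"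
  using someI_ex[OF exists_h[OF DK AC]] unfolding h_def by auto

lemma dA_e: "dA (phi h) = 1" using phi_d[of h] h_props phi_one by simp

lemma mult_term:
  "(\<Sum>i\<in>degs grK x. \<Sum>j\<in>degs grA b. gsign (i * j) * ((a * comp grA j b) * phi (comp grK i x * y)))
   = a * phi x * (b * phi y)"
proof -
  have t: "gsign (i * j) * ((a * comp grA j b) * phi (comp grK i x * y))
         = (a * phi (comp grK i x)) * (comp grA j b * phi y)" for i j
  proof -
    have c: "phi (comp grK i x) * comp grA j b = gsign (i * j) * (comp grA j b * phi (comp grK i x))"
      by (rule centre_hom[OF GA phi_centre phi_deg[OF comp_props(2)[OF GK]] comp_props(2)[OF GA]])
    have "gsign (i * j) * ((a * comp grA j b) * phi (comp grK i x * y))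
        = a * (gsign (i * j) * (comp grA j b * phi (comp grK i x))) * phi y"
      by (simp add: phi_mult mult.assoc gsign_commute)
    also have "\<dots> = a * (phi (comp grK i x) * comp grA j b) * phi y" using c by simp
    finally show ?thesis by (simp add: mult.assoc)
  qed
  have "(\<Sum>i\<in>degs grK x. \<Sum>j\<in>degs grA b. gsign (i * j) * ((a * comp grA j b) * phi (comp grK i x * y)))
      = (\<Sum>i\<in>degs grK x. a * phi (comp grK i x)) * (\<Sum>j\<in>degs grA b. comp grA j b * phi y)"
    by (simp add: t sum_product)
  also have "\<dots> = (a * phi (\<Sum>i\<in>degs grK x. comp grK i x)) * ((\<Sum>j\<in>degs grA b. comp grA j b) * phi y)"
    by (simp add: phi_sum sum_distrib_left sum_distrib_right)
  also have "\<dots> = a * phi x * (b * phi y)"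
    by (simp only: comp_props(3)[OF GK, of x, symmetric] comp_props(3)[OF GA, of b, symmetric])
  finally show ?thesis .
qed

lemma alpha_mult:
  "tens_alpha phi (tens_mult grK grA t s) = tens_alpha phi t * tens_alpha phi s"
proof -
  let ?g = "\<lambda>p. fst p * phi (snd p)"
  have "tens_alpha phi (tens_mult grK grA t s) = lin (\<lambda>p. lin (\<lambda>q. ?g p * ?g q) s) t"
    unfolding alpha_lin tens_mult_def lin_extend
    by (simp add: lin_sum lin_cmul of_int_gsign mult_term)
  also have "\<dots> = lin ?g t * lin ?g s"
    by (simp add: lin_mult_left lin_mult_right)
  finally show ?thesis by (simp add: alpha_lin)
qed

lemma mult_dom:
  assumes "t \<in> tens_dom dA" "s \<in> tens_dom dA"
  shows "tens_mult grK grA t s \<in> tens_dom dA"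
  unfolding tens_mult_def
proof (rule dom_extend, rule dom_extend, rule dom_sum, rule dom_sum, rule dom_cmul, rule dom_of)
  fix p q i j
  assume "p \<in> Poly_Mapping.keys t" "q \<in> Poly_Mapping.keys s"
  then have a: "dA (fst p) = 0" and b: "dA (fst q) = 0" using assms unfolding dom_iff by auto
  show "dA (fst p * comp grA j (fst q)) = 0"
    by (rule cycle_mult[OF DA a comp_cycle[OF DA b]])
qed

lemma diff_dom:
  assumes "t \<in> tens_dom dA"
  shows "tens_diff grA dK t \<in> tens_dom dA"
  unfolding tens_diff_def
proof (rule dom_extend, rule dom_sum, rule dom_cmul, rule dom_of)
  fix p n
  assume "p \<in> Poly_Mapping.keys t"
  then have a: "dA (fst p) = 0" using assms unfolding dom_iff by auto
  show "dA (comp grA n (fst p)) = 0" by (rule comp_cycle[OF DA a])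
qed

lemma alpha_diff:
  assumes "t \<in> tens_dom dA"
  shows "tens_alpha phi (tens_diff grA dK t) = dA (tens_alpha phi t)"
proof -
  have "tens_alpha phi (tens_diff grA dK t) =
     lin (\<lambda>p. \<Sum>n\<in>degs grA (fst p). gsign n * (comp grA n (fst p) * phi (dK (snd p)))) t"
    unfolding alpha_lin tens_diff_def lin_extend
    by (simp add: lin_sum lin_cmul of_int_gsign)
  also have "\<dots> = lin (\<lambda>p. dA (fst p * phi (snd p))) t"
  proof (rule lin_cong)
    fix p assume "p \<in> Poly_Mapping.keys t"
    then have z: "dA (fst p) = 0" using assms unfolding dom_iff by auto
    show "(\<Sum>n\<in>degs grA (fst p). gsign n * (comp grA n (fst p) * phi (dK (snd p)))) = dA (fst p * phi (snd p))"
      unfolding leib_gen[OF DA] using comp_cycle[OF DA z] by (simp add: phi_d)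
  qed
  also have "\<dots> = dA (tens_alpha phi t)" by (simp add: alpha_lin lin_d[OF DA])
  finally show ?thesis .
qed

lemma alpha_deg:
  assumes "t \<in> tens_gr grK grA dA n"
  shows "tens_alpha phi t \<in> grA n"
  unfolding alpha_lin
proof (rule lin_in_gr[OF GA])
  fix p assume "p \<in> Poly_Mapping.keys t"
  moreover have "Poly_Mapping.keys t \<subseteq> {(a, x). dA a = 0 \<and> (\<exists>p. a \<in> grA p \<and> x \<in> grK (n - p))}"
    using assms unfolding tens_gr_def by simp
  ultimately have mem: "p \<in> {(a, x). dA a = 0 \<and> (\<exists>p. a \<in> grA p \<and> x \<in> grK (n - p))}"
    by (rule rev_subsetD)
  obtain a x where px: "p = (a, x)" by (cases p)
  with mem have "\<exists>k. a \<in> grA k \<and> x \<in> grK (n - k)" by simp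
  then obtain k where "a \<in> grA k" "x \<in> grK (n - k)" by blast
  note p = px this
  show "fst p * phi (snd p) \<in> grA n"
    using graded_D(4)[OF GA p(2) phi_deg[OF p(3)]] p(1) by simp
qed

lemma one_dom: "tens_one \<in> tens_dom dA"
  unfolding tens_one_def by (rule dom_of[where dA=dA and a=1, OF d_one[OF DA]])

lemma alpha_one: "tens_alpha phi tens_one = 1"
  unfolding tens_one_def alpha_lin by (simp add: phi_one)

end

context setting begin

abbreviation R where "R \<equiv> tens_rel dK dA phi"

lemma R_minus: "t \<in> R \<Longrightarrow> - t \<in> R"
proof -
  assume "t \<in> R"
  then have "0 - t \<in> R" by (rule tens_rel.diff[OF tens_rel.zero])
  then show ?thesis by simp
qed

lemma R_add: "t \<in> R \<Longrightarrow> s \<in> R \<Longrightarrow> t + s \<in> R"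
proof -
  assume "t \<in> R" "s \<in> R"
  then have "t - (- s) \<in> R" by (intro tens_rel.diff R_minus)
  then show ?thesis by simp
qed

lemma R_comb: "u \<in> R \<Longrightarrow> v \<in> R \<Longrightarrow> w = u + v \<Longrightarrow> w \<in> R"
  using R_add by simp

lemma R_of0: "frag_of (0, x) \<in> R"
proof -
  have "frag_of (0 + 0, x) - frag_of (0, x) - frag_of (0, x) \<in> R"
    by (rule tens_rel.add_left) (simp_all add: d_zero[OF DA])
  then have "- frag_of (0, x) \<in> R" by simp
  then show ?thesis using R_minus by fastforce
qed

lemma alpha_R: "t \<in> R \<Longrightarrow> tens_alpha phi t = 0"
proof (induction rule: tens_rel.induct)
  case (add_left a a' x)
  then show ?case by (simp add: alpha_lin lin_diff distrib_right)
next
  case (add_right a x x')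
  then show ?case by (simp add: alpha_lin lin_diff distrib_left phi_add)
next
  case (balanced a r x)
  then show ?case by (simp add: alpha_lin lin_diff phi_mult mult.assoc)
next
  case zero
  then show ?case by (simp add: alpha_lin)
next
  case (diff t s)
  then show ?case by (simp add: alpha_lin lin_diff)
qed

definition PP where
  "PP t \<longleftrightarrow> (\<exists>b c. dA b = 0 \<and> dA c = 0 \<and> t - (frag_of (b, 1) + frag_of (c, h)) \<in> R)"

lemma PP_cong: "PP t \<Longrightarrow> t' - t \<in> R \<Longrightarrow> PP t'"
proof -
  assume "PP t" "t' - t \<in> R"
  then obtain b c where bc: "dA b = 0" "dA c = 0" "t - (frag_of (b, 1) + frag_of (c, h)) \<in> R"
    unfolding PP_def by blast
  have "t' - (frag_of (b, 1) + frag_of (c, h)) \<in> R"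
    by (rule R_comb[OF \<open>t' - t \<in> R\<close> bc(3)]) simp
  then show ?thesis unfolding PP_def using bc(1,2) by blast
qed

lemma PP_zero: "PP 0"
proof -
  have "- (frag_of (0, 1) + frag_of (0, h)) \<in> R" by (intro R_minus R_add R_of0)
  then show ?thesis unfolding PP_def using d_zero[OF DA] by auto
qed

lemma R_left:
  assumes "dA b1 = 0" "dA b2 = 0"
  shows "frag_of (b1, y) - frag_of (b1 - b2, y) - frag_of (b2, y) \<in> R"
proof -
  have "frag_of ((b1 - b2) + b2, y) - frag_of (b1 - b2, y) - frag_of (b2, y) \<in> R"
    by (rule tens_rel.add_left) (simp_all add: assms d_diff[OF DA])
  then show ?thesis by simp
qed

lemma PP_diff: "PP t \<Longrightarrow> PP s \<Longrightarrow> PP (t - s)"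
proof -
  assume "PP t" "PP s"
  then obtain b1 c1 b2 c2 where
    1: "dA b1 = 0" "dA c1 = 0" "t - (frag_of (b1, 1) + frag_of (c1, h)) \<in> R" and
    2: "dA b2 = 0" "dA c2 = 0" "s - (frag_of (b2, 1) + frag_of (c2, h)) \<in> R"
    unfolding PP_def by blast
  have L1: "frag_of (b1, 1) - frag_of (b1 - b2, 1) - frag_of (b2, 1) \<in> R" by (rule R_left[OF 1(1) 2(1)])
  have L2: "frag_of (c1, h) - frag_of (c1 - c2, h) - frag_of (c2, h) \<in> R" by (rule R_left[OF 1(2) 2(2)])
  have "(t - s) - (frag_of (b1 - b2, 1) + frag_of (c1 - c2, h)) \<in> R"
    by (rule R_comb[OF tens_rel.diff[OF 1(3) 2(3)] R_add[OF L1 L2]]) (simp add: algebra_simps)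
  moreover have "dA (b1 - b2) = 0" "dA (c1 - c2) = 0" using 1 2 by (simp_all add: d_diff[OF DA])
  ultimately show ?thesis unfolding PP_def by blast
qed

lemma PP_add: "PP t \<Longrightarrow> PP s \<Longrightarrow> PP (t + s)"
proof -
  assume "PP t" "PP s"
  then have "PP (t - (0 - s))" by (intro PP_diff PP_zero)
  then show ?thesis by simp
qed

lemma GCr: "x \<in> grK m \<Longrightarrow> y \<in> grK n \<Longrightarrow> x * y = gsign (m * n) * (y * x)"
  using GC unfolding graded_commutative_def by blast

lemma PP_hom:
  assumes a: "dA a = 0" and xm: "x \<in> grK m"
  shows "PP (frag_of (a, x))"
proof -
  have hx: "dK (h * x) = x - h * dK x"
    using dgD(5)[OF DK h_props(1), of x] by (simp add: h_props(2) gsign_m1)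
  have gc: "h * dK x = gsign ((-1) * (m + 1)) * (dK x * h)"
    by (rule GCr[OF h_props(1) dgD(3)[OF DK xm]])
  define r1 where "r1 = dK (h * x)"
  define r2 where "r2 = gsign ((-1) * (m + 1)) * dK x"
  have xe: "x = r1 * 1 + r2 * h"
    unfolding r1_def r2_def hx by (simp add: gc mult.assoc)
  have r1c: "dK r1 = 0" unfolding r1_def by (rule dgD(4)[OF DK])
  have r2c: "dK r2 = 0" unfolding r2_def by (simp add: d_gsign[OF DK] dgD(4)[OF DK])
  define b where "b = a * phi r1"
  define c where "c = a * phi r2"
  have bc: "dA b = 0" unfolding b_def
    by (rule cycle_mult[OF DA a]) (simp add: phi_d[symmetric] r1c phi_zero)
  have cc: "dA c = 0" unfolding c_def
    by (rule cycle_mult[OF DA a]) (simp add: phi_d[symmetric] r2c phi_zero)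
  have E1: "frag_of (a, r1 * 1 + r2 * h) - frag_of (a, r1 * 1) - frag_of (a, r2 * h) \<in> R"
    by (rule tens_rel.add_right[where dK=dK and dA=dA and phi=phi and a=a, OF a])
  have E2: "frag_of (a * phi r1, 1) - frag_of (a, r1 * 1) \<in> R"
    by (rule tens_rel.balanced[where dK=dK and dA=dA and phi=phi and a=a and r=r1, OF a r1c])
  have E3: "frag_of (a * phi r2, h) - frag_of (a, r2 * h) \<in> R"
    by (rule tens_rel.balanced[where dK=dK and dA=dA and phi=phi and a=a and r=r2, OF a r2c])
  have fx: "frag_of (a, x) = frag_of (a, r1 * 1 + r2 * h)" by (subst xe) (rule refl)
  have "frag_of (a, x) - (frag_of (b, 1) + frag_of (c, h)) \<in> R"
    by (rule R_comb[OF E1 R_minus[OF R_add[OF E2 E3]]]) (simp only: fx b_def c_def, simp add: algebra_simps)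
  then show ?thesis unfolding PP_def using bc cc by blast
qed

lemma PP_frag:
  assumes a: "dA a = 0"
  shows "PP (frag_of (a, x))"
proof -
  have Q0: "PP (frag_of (a, 0))"
  proof -
    have "frag_of (a, 0 + 0) - frag_of (a, 0) - frag_of (a, 0) \<in> R" by (rule tens_rel.add_right[where dK=dK and dA=dA and phi=phi and a=a, OF a])
    then have "- frag_of (a, 0) \<in> R" by simp
    then have "frag_of (a, 0) - 0 \<in> R" using R_minus by fastforce
    then show ?thesis by (rule PP_cong[OF PP_zero])
  qed
  have Qadd: "PP (frag_of (a, y + y'))" if "PP (frag_of (a, y))" "PP (frag_of (a, y'))" for y y'
  proof (rule PP_cong[OF PP_add[OF that]])
    show "frag_of (a, y + y') - (frag_of (a, y) + frag_of (a, y')) \<in> R"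
      using tens_rel.add_right[where dK=dK and dA=dA and phi=phi and a=a, OF a, of y y'] by (simp add: algebra_simps)
  qed
  have Qsum: "PP (frag_of (a, \<Sum>n\<in>S. f n))" if "finite S" "\<And>n. n \<in> S \<Longrightarrow> PP (frag_of (a, f n))" for S f
    using that by (induction S rule: finite_induct) (simp_all add: Q0 Qadd)
  have "PP (frag_of (a, \<Sum>n\<in>degs grK x. comp grK n x))"
    by (rule Qsum[OF comp_props(1)[OF GK]]) (rule PP_hom[OF a comp_props(2)[OF GK]])
  then show ?thesis by (simp only: comp_props(3)[OF GK, of x, symmetric])
qed

lemma alpha_inj:
  assumes td: "t \<in> tens_dom dA" and at: "tens_alpha phi t = 0"
  shows "t \<in> R"
proof -
  have ks: "Poly_Mapping.keys t \<subseteq> {p. dA (fst p) = 0}" using td unfolding dom_iff by blast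
  have "PP t" using ks
  proof (induction t rule: frag_induction)
    case zero then show ?case by (rule PP_zero)
  next
    case (one p)
    obtain a y where p: "p = (a, y)" by (cases p)
    with one have "dA a = 0" by simp
    then show ?case unfolding p by (rule PP_frag)
  next
    case (diff a b) then show ?case by (rule PP_diff)
  qed
  then obtain b c where bc: "dA b = 0" "dA c = 0" and U: "t - (frag_of (b, 1) + frag_of (c, h)) \<in> R"
    unfolding PP_def by blast
  have "tens_alpha phi (t - (frag_of (b, 1) + frag_of (c, h))) = 0" by (rule alpha_R[OF U])
  then have "b + c * phi h = 0" using at by (simp add: alpha_lin lin_diff lin_add phi_one)
  then have ce: "c * phi h = - b" by (metis add.commute minus_unique)
  have dsum: "dA (c * phi h) = (\<Sum>n\<in>degs grA c. gsign n * comp grA n c)"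
    unfolding leib_gen[OF DA] by (simp add: comp_cycle[OF DA bc(2)] dA_e)
  have dz: "dA (c * phi h) = 0" unfolding ce by (simp add: d_minus[OF DA] bc(1))
  have "degs grA c = {}"
  proof (rule ccontr)
    assume "degs grA c \<noteq> {}"
    then obtain n where n: "n \<in> degs grA c" by blast
    have "comp grA n (dA (c * phi h)) = gsign n * comp grA n c"
    proof (rule comp_unique[OF GA comp_props(1)[OF GA] _ _ dsum])
      show "gsign k * comp grA k c \<in> grA k" for k by (rule gsign_in_gr[OF GA comp_props(2)[OF GA]])
      show "k \<notin> degs grA c \<Longrightarrow> gsign k * comp grA k c = 0" for k by (simp add: degs_def)
    qed
    then have "gsign n * comp grA n c = 0" unfolding dz comp_zero[OF GA] by simp
    then have "comp grA n c = 0" by (metis gsign_cancel mult_zero_right)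
    then show False using n unfolding degs_def by simp
  qed
  then have c0: "c = 0" using comp_props(3)[OF GA, of c] by simp
  then have b0: "b = 0" using ce by simp
  have "frag_of (b, 1) + frag_of (c, h) \<in> R" unfolding b0 c0 by (intro R_add R_of0)
  from R_add[OF U this] show ?thesis by simp
qed

lemma alpha_surj: "\<exists>t\<in>tens_dom dA. tens_alpha phi t = a"
proof -
  let ?e = "phi h"
  define t where "t = (\<Sum>n\<in>degs grA a. frag_cmul (gsign n)
      (frag_of (dA (comp grA n a * ?e), 1) - frag_of (dA (comp grA n a), h)))"
  have "t \<in> tens_dom dA" unfolding t_def
    by (intro dom_sum dom_cmul dom_diff dom_of dgD(4)[OF DA])
  moreover have "tens_alpha phi t = a"
  proof -
    have "tens_alpha phi t = (\<Sum>n\<in>degs grA a. gsign n * (dA (comp grA n a * ?e) - dA (comp grA n a) * ?e))"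
      unfolding t_def by (simp add: alpha_lin lin_sum lin_cmul lin_diff of_int_gsign phi_one)
    also have "\<dots> = (\<Sum>n\<in>degs grA a. comp grA n a)"
    proof (rule sum.cong[OF refl])
      fix n
      have "dA (comp grA n a * ?e) = dA (comp grA n a) * ?e + gsign n * (comp grA n a * dA ?e)"
        by (rule dgD(5)[OF DA comp_props(2)[OF GA]])
      then show "gsign n * (dA (comp grA n a * ?e) - dA (comp grA n a) * ?e) = comp grA n a"
        by (simp add: dA_e gsign_cancel)
    qed
    also have "\<dots> = a" by (rule comp_props(3)[OF GA, symmetric])
    finally show ?thesis .
  qed
  ultimately show ?thesis by blast
qed

end

theorem lemma4p5:
  fixes grK :: "int \<Rightarrow> 'k::ring_1 set" and dK :: "'k \<Rightarrow> 'k"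
    and grA :: "int \<Rightarrow> 'a::ring_1 set" and dA :: "'a \<Rightarrow> 'a"
    and phi :: "'k \<Rightarrow> 'a"
  assumes "dg_algebra grK dK" and "graded_commutative grK" and "acyclic dK"
    and "dg_algebra_over grK dK grA dA phi"
  shows "\<comment> \<open>the tensor operations are well defined on representatives\<close>
         (\<forall>t\<in>tens_dom dA. \<forall>s\<in>tens_dom dA. tens_mult grK grA t s \<in> tens_dom dA) \<and>
         (\<forall>t\<in>tens_dom dA. tens_diff grA dK t \<in> tens_dom dA) \<and>
         tens_one \<in> tens_dom dA \<and>
         \<comment> \<open>alpha is well defined on the quotient\<close>
         (\<forall>t\<in>tens_rel dK dA phi. tens_alpha phi t = 0) \<and>
         \<comment> \<open>alpha is injective on the quotient\<close>
         (\<forall>t\<in>tens_dom dA. tens_alpha phi t = 0 \<longrightarrow> t \<in> tens_rel dK dA phi) \<and>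
         \<comment> \<open>alpha is surjective\<close>
         (\<forall>a. \<exists>t\<in>tens_dom dA. tens_alpha phi t = a) \<and>
         \<comment> \<open>alpha is a unital ring homomorphism\<close>
         tens_alpha phi tens_one = 1 \<and>
         (\<forall>t\<in>tens_dom dA. \<forall>s\<in>tens_dom dA.
            tens_alpha phi (tens_mult grK grA t s) = tens_alpha phi t * tens_alpha phi s) \<and>
         \<comment> \<open>alpha commutes with the differentials\<close>
         (\<forall>t\<in>tens_dom dA. tens_alpha phi (tens_diff grA dK t) = dA (tens_alpha phi t)) \<and>
         \<comment> \<open>alpha has degree 0\<close>
         (\<forall>n. \<forall>t\<in>tens_gr grK grA dA n. tens_alpha phi t \<in> grA n)"
proof -
  interpret S: setting grK dK grA dA phi
    by (rule setting.intro[OF assms])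
  show ?thesis
    using S.mult_dom S.diff_dom S.one_dom S.alpha_R S.alpha_inj S.alpha_surj S.alpha_one
      S.alpha_mult S.alpha_diff S.alpha_deg
    by (intro conjI ballI allI impI) auto
qed

end
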